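(* Fix any configuration of open and closed sites on $\mathcal{L}$. Then for every $n\ge 1$, $$\xi_n=\overline{\xi}_n\cap[\ell_n,\infty).$$ Moreover, if $\xi_n\neq\emptyset$ then $u_n=\overline{u}_n$.
   Context: Let $\mathcal{L}=\{(n,m)\in\mathbb{Z}^2:n\ge0,\ n+m\text{ even}\}$. Each site of $\mathcal{L}$ is open or closed. For $z,z'\in\mathcal{L}$ write $z\to z'$ if there exist $k\ge0$ and sites $z=z_0,\dots,z_k=z'$ of $\mathcal{L}$ such that $z_0,\dots,z_{k-1}$ are open and $z_{i+1}-z_i\in\{(1,1),(2,0),(1,-1)\}$ for every $i$. Let $o=(0,0)$. Use the conventions $\sup\emptyset=-\infty$ and $\inf\emptyset=+\infty$. Define $\xi_n=\{x:o\to(n,x)\}$, $u_n=\sup\xi_n$ and $\ell_n=\inf\xi_n$. For $n\ge1$, let $$\overline{\xi}_n=\{x:\exists y\le0\text{ such that }(0,y)\to(n,x)\text{ or }(1,y)\to(n,x)\},$$ where only sites of $\mathcal{L}$ are considered, and let $\overline{u}_n=\sup\overline{\xi}_n$. *)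

theory Defs
  imports Main "HOL-Library.Extended_Real"
begin

definition Lat :: "(int \<times> int) set" where
  "Lat = {(n, m). n \<ge> 0 \<and> even (n + m)}"

definition steps :: "(int \<times> int) set" where
  "steps = {(1, 1), (2, 0), (1, -1)}"

text \<open>A configuration is a predicate opn saying which sites are open.
  reach opn z z' means z -> z': a path z = z0, ..., zk = z' of sites of L
  with z0..z(k-1) open and increments in steps (k = 0 allowed).\<close>
inductive reach :: "(int \<times> int \<Rightarrow> bool) \<Rightarrow> int \<times> int \<Rightarrow> int \<times> int \<Rightarrow> bool"
  for opn where
  refl: "z \<in> Lat \<Longrightarrow> reach opn z z"
| step: "z \<in> Lat \<Longrightarrow> opn z \<Longrightarrow> s \<in> steps \<Longrightarrow> reach opn (fst z + fst s, snd z + snd s) z' \<Longrightarrow> reach opn z z'"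

definition xi :: "(int \<times> int \<Rightarrow> bool) \<Rightarrow> nat \<Rightarrow> int set" where
  "xi opn n = {x. reach opn (0, 0) (int n, x)}"

definition xibar :: "(int \<times> int \<Rightarrow> bool) \<Rightarrow> nat \<Rightarrow> int set" where
  "xibar opn n = {x. \<exists>y \<le> 0. reach opn (0, y) (int n, x) \<or> reach opn (1, y) (int n, x)}"

text \<open>Sup/Inf in the extended reals: Sup {} = -infinity, Inf {} = +infinity.\<close>
definition u_n :: "(int \<times> int \<Rightarrow> bool) \<Rightarrow> nat \<Rightarrow> ereal" where
  "u_n opn n = Sup ((\<lambda>x. ereal (real_of_int x)) ` xi opn n)"

definition l_n :: "(int \<times> int \<Rightarrow> bool) \<Rightarrow> nat \<Rightarrow> ereal" where
  "l_n opn n = Inf ((\<lambda>x. ereal (real_of_int x)) ` xi opn n)"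

definition ubar_n :: "(int \<times> int \<Rightarrow> bool) \<Rightarrow> nat \<Rightarrow> ereal" where
  "ubar_n opn n = Sup ((\<lambda>x. ereal (real_of_int x)) ` xibar opn n)"

end

theory Submission
  imports Defs
begin

lemma reach_Lat: "reach opn a b \<Longrightarrow> a \<in> Lat \<and> b \<in> Lat"
  by (induction rule: reach.induct) auto

lemma reach_mono: "reach opn a b \<Longrightarrow> fst a \<le> fst b \<and> snd b - snd a \<le> fst b - fst a \<and> snd a - snd b \<le> fst b - fst a"
  by (induction rule: reach.induct) (auto simp: steps_def)

lemma reach_neq_opn: "reach opn a b \<Longrightarrow> a \<noteq> b \<Longrightarrow> opn a"
  by (cases rule: reach.cases) auto

lemma reach_snoc: "reach opn a p \<Longrightarrow> opn p \<Longrightarrow> s \<in> steps \<Longrightarrow> (fst p + fst s, snd p + snd s) \<in> Lat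
   \<Longrightarrow> reach opn a (fst p + fst s, snd p + snd s)"
proof (induction rule: reach.induct)
  case (refl z)
  then show ?case by (meson reach.refl reach.step)
next
  case (step z s' z')
  then show ?case by (meson reach.step)
qed

lemma reach_back: "reach opn a b \<Longrightarrow> fst a < fst b \<Longrightarrow>
  \<exists>p s. reach opn a p \<and> opn p \<and> s \<in> steps \<and> b = (fst p + fst s, snd p + snd s)"
proof (induction rule: reach.induct)
  case (refl z)
  then show ?case by simp
next
  case (step z s z')
  show ?case
  proof (cases "fst z + fst s < fst z'")
    case True
    then obtain p s2 where "reach opn (fst z + fst s, snd z + snd s) p" "opn p" "s2 \<in> steps"
      "z' = (fst p + fst s2, snd p + snd s2)" using step by auto
    moreover have "reach opn z p" using step(1,2,3) \<open>reach opn (fst z + fst s, snd z + snd s) p\<close> by (rule reach.step)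
    ultimately show ?thesis by blast
  next
    case False
    have m: "fst z + fst s \<le> fst z' \<and> snd z' - (snd z + snd s) \<le> fst z' - (fst z + fst s) \<and> (snd z + snd s) - snd z' \<le> fst z' - (fst z + fst s)"
      using reach_mono[OF step.hyps(4)] by simp
    hence "z' = (fst z + fst s, snd z + snd s)" using False by (cases z') auto
    then show ?thesis using step reach.refl by blast
  qed
qed

definition Rch :: "(int \<times> int \<Rightarrow> bool) \<Rightarrow> (int \<times> int) set \<Rightarrow> int \<Rightarrow> int \<Rightarrow> bool" where
  "Rch opn A k x = (\<exists>a\<in>A. reach opn a (k, x))"

definition RV :: "(int \<times> int \<Rightarrow> bool) \<Rightarrow> (int \<times> int) set \<Rightarrow> int \<Rightarrow> int \<Rightarrow> bool" where
  "RV opn A k x = (Rch opn A k x \<or> (Rch opn A (k-1) x \<and> opn (k-1, x)))"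

definition E :: "(int \<times> int \<Rightarrow> bool) \<Rightarrow> int \<Rightarrow> int \<Rightarrow> int \<Rightarrow> bool" where
  "E opn k z x = ((even (k+z) \<and> opn (k,z) \<and> \<bar>x-z\<bar> \<le> 1) \<or> (odd (k+z) \<and> x = z))"

lemma Rch_even: "Rch opn A k x \<Longrightarrow> even (k + x)"
  unfolding Rch_def using reach_Lat by (auto simp: Lat_def)

lemma RV_back:
  assumes "\<forall>a\<in>A. fst a \<le> k" "RV opn A (k+1) x"
  shows "\<exists>z. RV opn A k z \<and> E opn k z x"
proof (cases "Rch opn A (k+1) x")
  case True
  then obtain a where a: "a \<in> A" "reach opn a (k+1, x)" unfolding Rch_def by auto
  hence "fst a < fst (k+1,x)" using assms(1) by auto
  then obtain p s where p: "reach opn a p" "opn p" "s \<in> steps" "(k+1,x) = (fst p + fst s, snd p + snd s)"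
    using reach_back[OF a(2)] by blast
  have pe: "even (fst p + snd p)" using reach_Lat[OF p(1)] by (cases p) (auto simp: Lat_def)
  have "s = (1,1) \<or> s = (2,0) \<or> s = (1,-1)" using p(3) by (auto simp: steps_def)
  then show ?thesis
  proof (elim disjE)
    assume s: "s = (1,1)"
    hence pp: "p = (k, x-1)" using p(4) by (cases p) auto
    have "RV opn A k (x-1)" unfolding RV_def Rch_def using a p pp by auto
    moreover have "E opn k (x-1) x" unfolding E_def using pe pp p(2) by auto
    ultimately show ?thesis by blast
  next
    assume s: "s = (1,-1)"
    hence pp: "p = (k, x+1)" using p(4) by (cases p) auto
    have "RV opn A k (x+1)" unfolding RV_def Rch_def using a p pp by auto
    moreover have "E opn k (x+1) x" unfolding E_def using pe pp p(2) by auto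
    ultimately show ?thesis by blast
  next
    assume s: "s = (2,0)"
    hence pp: "p = (k-1, x)" using p(4) by (cases p) auto
    have "RV opn A k x" unfolding RV_def Rch_def using a p pp by auto
    moreover have "odd (k + x)" using pe pp by auto
    hence "E opn k x x" unfolding E_def by auto
    ultimately show ?thesis by blast
  qed
next
  case False
  hence v: "Rch opn A k x" "opn (k, x)" using assms(2) unfolding RV_def by auto
  have "RV opn A k x" using v unfolding RV_def by auto
  moreover have "E opn k x x" unfolding E_def using Rch_even[OF v(1)] v(2) by auto
  ultimately show ?thesis by blast
qed

lemma RV_fwd:
  assumes "RV opn A k z" "E opn k z x"
  shows "RV opn A (k+1) x"
proof (cases "Rch opn A k z")
  case True
  have ev: "even (k+z)" using Rch_even[OF True] .
  then have o: "opn (k,z)" "\<bar>x-z\<bar> \<le> 1" using assms(2) unfolding E_def by auto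
  obtain a where a: "a \<in> A" "reach opn a (k, z)" using True unfolding Rch_def by auto
  have "x = z \<or> x = z + 1 \<or> x = z - 1" using o(2) by auto
  then show ?thesis
  proof (elim disjE)
    assume "x = z" thus ?thesis using True o unfolding RV_def by auto
  next
    assume xz: "x = z + 1"
    have "reach opn a (fst (k,z) + fst (1::int,1::int), snd (k,z) + snd (1::int,1::int))"
      by (rule reach_snoc[OF a(2)]) (use o ev in \<open>auto simp: steps_def Lat_def reach_mono\<close>,
          use reach_mono[OF a(2)] reach_Lat[OF a(2)] in \<open>auto simp: Lat_def\<close>)
    thus ?thesis using a xz unfolding RV_def Rch_def by auto
  next
    assume xz: "x = z - 1"
    have "reach opn a (fst (k,z) + fst (1::int,-1::int), snd (k,z) + snd (1::int,-1::int))"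
      by (rule reach_snoc[OF a(2)]) (use o ev in \<open>auto simp: steps_def Lat_def reach_mono\<close>,
          use reach_mono[OF a(2)] reach_Lat[OF a(2)] in \<open>auto simp: Lat_def\<close>)
    thus ?thesis using a xz unfolding RV_def Rch_def by auto
  qed
next
  case False
  hence v: "Rch opn A (k-1) z" "opn (k-1, z)" using assms(1) unfolding RV_def by auto
  have "odd (k+z)" using Rch_even[OF v(1)] by auto
  hence xz: "x = z" using assms(2) unfolding E_def by auto
  obtain a where a: "a \<in> A" "reach opn a (k-1, z)" using v unfolding Rch_def by auto
  have "reach opn a (fst (k-1,z) + fst (2::int,0::int), snd (k-1,z) + snd (2::int,0::int))"
    by (rule reach_snoc[OF a(2)]) (use v in \<open>auto simp: steps_def\<close>,
        use reach_mono[OF a(2)] reach_Lat[OF a(2)] in \<open>auto simp: Lat_def\<close>)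
  hence "reach opn a (k+1, z)" by (simp add: ac_simps)
  thus ?thesis using a xz unfolding RV_def Rch_def by auto
qed

definition AR :: "(int \<times> int) set" where "AR = {(0,0)}"
definition AS :: "(int \<times> int) set" where "AS = {(0,y)|y. y \<le> 0} \<union> {(1,y)|y. y \<le> 0}"

lemma base1:
  assumes "RV opn AS 1 x" "RV opn AR 1 w" "w \<le> x"
  shows "RV opn AR 1 x"
proof -
  have xle: "x \<le> 1"
    using assms(1) unfolding RV_def Rch_def AS_def
    by (auto dest!: reach_mono)
  have o: "opn (0,0)"
  proof -
    have "Rch opn AR 1 w \<or> (Rch opn AR 0 w \<and> opn (0, w))" using assms(2) unfolding RV_def by simp
    thus ?thesis
    proof
      assume "Rch opn AR 1 w"
      hence "reach opn (0,0) (1,w)" unfolding Rch_def AR_def by auto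
      thus ?thesis using reach_neq_opn by fastforce
    next
      assume h: "Rch opn AR 0 w \<and> opn (0, w)"
      hence "reach opn (0,0) (0,w)" unfolding Rch_def AR_def by auto
      hence "w = 0" using reach_mono by fastforce
      thus ?thesis using h by simp
    qed
  qed
  have wge: "w \<ge> -1" using assms(2) unfolding RV_def Rch_def AR_def
    by (auto dest!: reach_mono)
  have r0: "reach opn (0,0) (0,0)" by (rule reach.refl) (auto simp: Lat_def)
  have "x = -1 \<or> x = 0 \<or> x = 1" using xle wge assms(3) by auto
  then show ?thesis
  proof (elim disjE)
    assume "x = 0" thus ?thesis using r0 o unfolding RV_def Rch_def AR_def by auto
  next
    assume x: "x = 1"
    have "reach opn (0,0) (1,1)"
      by (rule reach.step[where s="(1,1)"]) (use o in \<open>auto simp: Lat_def steps_def intro: reach.refl\<close>)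
    thus ?thesis using x unfolding RV_def Rch_def AR_def by auto
  next
    assume x: "x = -1"
    have "reach opn (0,0) (1,-1)"
      by (rule reach.step[where s="(1,-1)"]) (use o in \<open>auto simp: Lat_def steps_def intro: reach.refl\<close>)
    thus ?thesis using x unfolding RV_def Rch_def AR_def by auto
  qed
qed

lemma crossing:
  assumes "k \<ge> 1"
  shows "\<forall>x. RV opn AS k x \<longrightarrow> (\<exists>w. RV opn AR k w \<and> w \<le> x) \<longrightarrow> RV opn AR k x"
  using assms
proof (induction k rule: int_ge_induct)
  case base
  then show ?case using base1 by blast
next
  case (step k)
  show ?case
  proof (intro allI impI)
    fix x assume sx: "RV opn AS (k+1) x" and "\<exists>w. RV opn AR (k+1) w \<and> w \<le> x"
    then obtain w' where w': "RV opn AR (k+1) w'" "w' \<le> x" by auto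
    show "RV opn AR (k+1) x"
    proof (cases "x = w'")
      case True thus ?thesis using w' by simp
    next
      case False
      have sa: "\<forall>a\<in>AS. fst a \<le> k" using step.hyps unfolding AS_def by auto
      have ra: "\<forall>a\<in>AR. fst a \<le> k" using step.hyps unfolding AR_def by auto
      obtain z where z: "RV opn AS k z" "E opn k z x" using RV_back[OF sa sx] by blast
      obtain w where w: "RV opn AR k w" "E opn k w w'" using RV_back[OF ra w'(1)] by blast
      show ?thesis
      proof (cases "w \<le> z")
        case True
        hence "RV opn AR k z" using step.IH z(1) w(1) by blast
        thus ?thesis using RV_fwd z(2) by blast
      next
        case False
        have "\<bar>x - z\<bar> \<le> 1" "\<bar>w' - w\<bar> \<le> 1" using z(2) w(2) unfolding E_def by auto
        hence eq: "x = z + 1" "w = z + 1" "w' = z" using False w'(2) \<open>x \<noteq> w'\<close> by auto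
        have "even (k+z)" using z(2) eq unfolding E_def by auto
        moreover have "even (k+(z+1))" using w(2) eq unfolding E_def by auto
        ultimately show ?thesis by simp
      qed
    qed
  qed
qed

lemma xi_eq: "xi opn n = {x. Rch opn AR (int n) x}"
  unfolding xi_def Rch_def AR_def by auto

lemma xibar_eq: "xibar opn n = {x. Rch opn AS (int n) x}"
  unfolding xibar_def Rch_def AS_def by auto

theorem mainTheorem4:
  fixes opn :: "int \<times> int \<Rightarrow> bool" and n :: nat
  assumes "n \<ge> 1"
  shows "xi opn n = {x \<in> xibar opn n. l_n opn n \<le> ereal (real_of_int x)}
         \<and> (xi opn n \<noteq> {} \<longrightarrow> u_n opn n = ubar_n opn n)"
proof -
  have sub: "xi opn n \<subseteq> xibar opn n" unfolding xi_def xibar_def by auto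
  have P1: "xi opn n = {x \<in> xibar opn n. l_n opn n \<le> ereal (real_of_int x)}"
  proof
    show "xi opn n \<subseteq> {x \<in> xibar opn n. l_n opn n \<le> ereal (real_of_int x)}"
      using sub unfolding l_n_def by (auto intro: Inf_lower)
  next
    show "{x \<in> xibar opn n. l_n opn n \<le> ereal (real_of_int x)} \<subseteq> xi opn n"
    proof
      fix x assume "x \<in> {x \<in> xibar opn n. l_n opn n \<le> ereal (real_of_int x)}"
      hence xb: "x \<in> xibar opn n" and lx: "l_n opn n \<le> ereal (real_of_int x)" by auto
      have "\<exists>w \<in> xi opn n. w \<le> x"
      proof (rule ccontr)
        assume "\<not> ?thesis"
        hence "\<forall>w\<in>xi opn n. x + 1 \<le> w" by auto
        hence "ereal (real_of_int (x+1)) \<le> l_n opn n" unfolding l_n_def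
          by (auto intro!: Inf_greatest)
        from order_trans[OF this lx] show False by simp
      qed
      then obtain w where "w \<in> xi opn n" "w \<le> x" by auto
      hence "RV opn AR (int n) w" unfolding xi_eq RV_def by auto
      moreover have sx: "Rch opn AS (int n) x" using xb unfolding xibar_eq by auto
      hence "RV opn AS (int n) x" unfolding RV_def by auto
      ultimately have "RV opn AR (int n) x" using crossing[of "int n" opn] assms \<open>w \<le> x\<close> by auto
      moreover have "\<not> Rch opn AR (int n - 1) x"
        using Rch_even[OF sx] Rch_even[of opn AR "int n - 1" x] by auto
      ultimately show "x \<in> xi opn n" unfolding RV_def xi_eq by auto
    qed
  qed
  have P2: "u_n opn n = ubar_n opn n" if ne: "xi opn n \<noteq> {}"
  proof (rule antisym)
    show "u_n opn n \<le> ubar_n opn n" unfolding u_n_def ubar_n_def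
      using sub by (intro Sup_subset_mono image_mono)
  next
    obtain w where w: "w \<in> xi opn n" using ne by auto
    show "ubar_n opn n \<le> u_n opn n" unfolding ubar_n_def
    proof (rule Sup_least)
      fix y assume "y \<in> (\<lambda>x. ereal (real_of_int x)) ` xibar opn n"
      then obtain x where x: "x \<in> xibar opn n" "y = ereal (real_of_int x)" by auto
      show "y \<le> u_n opn n"
      proof (cases "w \<le> x")
        case True
        have "l_n opn n \<le> ereal (real_of_int w)" using w unfolding l_n_def by (auto intro: Inf_lower)
        also have "\<dots> \<le> ereal (real_of_int x)" using True by simp
        finally have "x \<in> xi opn n" using P1 x(1) by auto
        thus ?thesis using x(2) unfolding u_n_def by (auto intro: Sup_upper)
      next
        case False
        have "y \<le> ereal (real_of_int w)" using False x(2) by simp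
        also have "\<dots> \<le> u_n opn n" using w unfolding u_n_def by (auto intro: Sup_upper)
        finally show ?thesis .
      qed
    qed
  qed
  show ?thesis using P1 P2 by blast
qed

end
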